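(* Let $d\ge 2$, $p=d-1$, $\lambda>0$, $u>0$, let $\mathbf N\sim\mathrm{NDFHL}^{(d)}(\lambda,u)$, and for $P>0$ let $\mathbf X\sim\mathcal N(\mathbf 0,\frac Pp\mathbf I_p)$ be independent of $\mathbf N$ and $\mathbf Y=\mathbf X+\mathbf N$. Then $$I(\mathbf X;\mathbf Y)\ge\frac p2\log P+O(1),\qquad P\to\infty,$$ i.e. there is a constant $c$ (independent of $P$) such that $I(\mathbf X;\mathbf Y)\ge \frac p2\log P-c$ for all sufficiently large $P$.
   Context: For an integer $d\ge2$, $p=d-1$, $\lambda>0$, $u>0$, the distribution $\mathrm{NDFHL}^{(d)}(\lambda,u)$ is the probability law on $\mathbb R^{p}$ with density $$f_{\mathbf N}(\mathbf n)=\frac{\lambda}{2^{\frac d2-1}\pi^{\frac d2}}\left(\frac{u}{\rho(\mathbf n)}\right)^{\frac d2}e^{\lambda u}K_{\frac d2}\bigl(u\rho(\mathbf n)\bigr),\qquad \rho(\mathbf n)=\sqrt{\|\mathbf n\|^2+\lambda^2},$$ where $K_\nu$ is the modified Bessel function of the second kind. Equivalently, it is the law of $\sigma\sqrt{T}\,\mathbf Z$ where $\sigma>0$, $\mathbf Z\sim\mathcal N(\mathbf 0,\mathbf I_p)$ is independent of $T$, and $T$ is inverse Gaussian with mean $\lambda/(u\sigma^2)$ and shape parameter $\lambda^2/\sigma^2$. Logarithms are natural. *)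

theory Defs
  imports "HOL-Probability.Probability"
begin

text \<open>Modified Bessel function of the second kind, via its standard integral
representation K_nu(x) = int_0^infty exp(-x cosh t) cosh(nu t) dt  (x > 0).\<close>
definition besselK :: "real \<Rightarrow> real \<Rightarrow> real" where
  "besselK \<nu> x = integral {0..} (\<lambda>t. exp (- x * cosh t) * cosh (\<nu> * t))"

text \<open>Density of NDFHL^(d)(lambda,u) on R^p, p = d - 1 = CARD('n).\<close>
definition ndfhl_density :: "nat \<Rightarrow> real \<Rightarrow> real \<Rightarrow> real^'n \<Rightarrow> real" where
  "ndfhl_density d lam u n =
     (let \<rho> = sqrt ((norm n)\<^sup>2 + lam\<^sup>2) in
      lam / (2 powr (real d / 2 - 1) * pi powr (real d / 2))
        * (u / \<rho>) powr (real d / 2) * exp (lam * u) * besselK (real d / 2) (u * \<rho>))"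

definition gauss_density :: "real \<Rightarrow> real^'n \<Rightarrow> real" where
  "gauss_density v x = (\<Prod>i\<in>UNIV. normal_density 0 (sqrt v) (x $ i))"

end

theory Submission
  imports Defs
begin


lemma Basis_vec_real: "(Basis :: (real^'n) set) = range (\<lambda>i. axis i 1)"
  by (auto simp: Basis_vec_def)

lemma nn_integral_vec_prod:
  fixes g :: "real \<Rightarrow> real"
  assumes [measurable]: "g \<in> borel_measurable borel" and nn: "\<And>t. 0 \<le> g t"
  shows "(\<integral>\<^sup>+x. (\<Prod>i\<in>UNIV. ennreal (g (x$i))) \<partial>(lborel::(real^'n) measure)) = (\<integral>\<^sup>+t. g t \<partial>lborel)^CARD('n)"
proof -
  have "(\<integral>\<^sup>+x. (\<Prod>b\<in>(Basis::(real^'n) set). ennreal (g (x \<bullet> b))) \<partial>lborel) = (\<Prod>b\<in>(Basis::(real^'n) set). (\<integral>\<^sup>+t. ennreal (g t) \<partial>lborel))"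
    by (rule nn_integral_lborel_prod) auto
  also have "(\<Prod>b\<in>(Basis::(real^'n) set). (\<integral>\<^sup>+t. ennreal (g t) \<partial>lborel)) = (\<integral>\<^sup>+t. g t \<partial>lborel)^CARD('n)"
    by (simp add: prod_constant) 
  also have "(\<lambda>x::real^'n. \<Prod>b\<in>(Basis::(real^'n) set). ennreal (g (x \<bullet> b))) = (\<lambda>x. \<Prod>i\<in>UNIV. ennreal (g (x$i)))"
    unfolding Basis_vec_real
    by (subst prod.reindex) (auto simp: inj_on_def axis_eq_axis cart_eq_inner_axis inner_commute)
  finally show ?thesis .
qed



lemma cosh_lower: fixes t :: real assumes "0 \<le> t" shows "1 + t\<^sup>2/4 \<le> cosh t"
proof -
  have "1 + t + t\<^sup>2/2 \<le> exp t" by (rule exp_lower_Taylor_quadratic[OF assms])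
  moreover have "1 + (-t) \<le> exp (-t)" by (rule exp_ge_add_one_self)
  moreover have "cosh t = (exp t + exp (-t))/2" by (simp add: cosh_field_def)
  ultimately show ?thesis by (simp add: field_simps)
qed

lemma cosh_upper: fixes y :: real shows "cosh y \<le> exp \<bar>y\<bar>"
  unfolding cosh_field_def by (cases "y \<ge> 0") auto

lemma besselK_nonneg: "0 \<le> besselK \<nu> x"
proof (cases "(\<lambda>t. exp (- x * cosh t) * cosh (\<nu> * t)) integrable_on {0..}")
  case True
  then show ?thesis unfolding besselK_def
    by (rule integral_nonneg) (auto intro!: mult_nonneg_nonneg simp: cosh_real_nonneg)
next
  case False
  then show ?thesis unfolding besselK_def by (simp add: not_integrable_integral)
qed

lemma besselK_le:
  assumes x: "0 < x"
  shows "besselK \<nu> x \<le> exp ((\<bar>\<nu>\<bar>+1)\<^sup>2 / x - x)"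
proof -
  define a where "a = \<bar>\<nu>\<bar>"
  define E where "E = exp ((a+1)\<^sup>2 / x - x)"
  have E0: "0 \<le> E" by (simp add: E_def)
  have gint: "((\<lambda>t. E * exp (- 1 * t)) has_integral E * (exp (- 1 * 0) / 1)) {0..}"
    by (intro has_integral_mult_right has_integral_exp_minus_to_infinity) auto
  have bound: "exp (- x * cosh t) * cosh (\<nu> * t) \<le> E * exp (- 1 * t)" if t: "t \<in> {0..}" for t
  proof -
    from t have t0: "0 \<le> t" by simp
    have "cosh (\<nu> * t) \<le> exp (a * t)" using cosh_upper[of "\<nu>*t"] t0 by (simp add: a_def abs_mult)
    moreover have "exp (- x * cosh t) \<le> exp (- x * (1 + t\<^sup>2/4))"
      using cosh_lower[OF t0] x by (simp add: mult_left_mono)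
    ultimately have "exp (- x * cosh t) * cosh (\<nu> * t) \<le> exp (- x * (1 + t\<^sup>2/4)) * exp (a * t)"
      by (intro mult_mono) (auto simp: cosh_real_nonneg)
    also have "\<dots> = exp (- x * (1 + t\<^sup>2/4) + a * t)" by (simp add: mult_exp_exp algebra_simps)
    also have "\<dots> \<le> exp ((a+1)\<^sup>2 / x - x - t)"
    proof -
      have "0 \<le> (x * t / 2 - (a+1))\<^sup>2 / x" using x by simp
      also have "(x * t / 2 - (a+1))\<^sup>2 / x = x * t\<^sup>2/4 - (a+1)*t + (a+1)\<^sup>2/x"
        using x by (simp add: field_simps power2_eq_square)
      finally show ?thesis by (simp add: algebra_simps)
    qed
    also have "\<dots> = E * exp (- 1 * t)" by (simp add: E_def exp_diff exp_minus exp_add field_simps)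
    finally show ?thesis .
  qed
  show ?thesis
  proof (cases "(\<lambda>t. exp (- x * cosh t) * cosh (\<nu> * t)) integrable_on {0..}")
    case True
    have "besselK \<nu> x \<le> integral {0..} (\<lambda>t. E * exp (- 1 * t))"
      unfolding besselK_def using True gint bound by (intro integral_le) (auto simp: has_integral_integrable)
    also have "\<dots> = E" using gint by (intro integral_unique) simp
    finally show ?thesis by (simp add: E_def a_def)
  next
    case False
    then show ?thesis unfolding besselK_def by (simp add: not_integrable_integral)
  qed
qed



lemma nn_integral_exponential_density: "0 < b \<Longrightarrow> (\<integral>\<^sup>+t. ennreal (exponential_density b t) \<partial>lborel) = 1"
proof -
  assume b: "0 < b"
  interpret prob_space "density lborel (exponential_density b)" by (rule prob_space_exponential_density[OF b])
  have "emeasure (density lborel (exponential_density b)) UNIV = 1" using emeasure_space_1 by simp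
  then show ?thesis by (simp add: emeasure_density)
qed

lemma nn_integral_exp_abs_finite:
  fixes b :: real assumes b: "0 < b"
  shows "(\<integral>\<^sup>+t. ennreal (exp (- b * \<bar>t\<bar>)) \<partial>lborel) < \<infinity>"
proof -
  have "(\<integral>\<^sup>+t. ennreal (exp (- b * \<bar>t\<bar>)) \<partial>lborel) \<le>
        (\<integral>\<^sup>+t. ennreal (1/b) * ennreal (exponential_density b t) + ennreal (1/b) * ennreal (exponential_density b (0 + (-1) * t)) \<partial>lborel)"
  proof (intro nn_integral_mono)
    fix t :: real
    have "exp (- b * \<bar>t\<bar>) \<le> 1/b * exponential_density b t + 1/b * exponential_density b (0 + (-1) * t)"
      using b by (cases "t < 0") (auto simp: exponential_density_def field_simps)
    then show "ennreal (exp (- b * \<bar>t\<bar>)) \<le> ennreal (1/b) * ennreal (exponential_density b t) + ennreal (1/b) * ennreal (exponential_density b (0 + (-1) * t))"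
      using b by (simp add: ennreal_mult'[symmetric] ennreal_plus[symmetric] exponential_density_def del: ennreal_plus)
  qed
  also have "\<dots> = ennreal (1/b) * (\<integral>\<^sup>+t. ennreal (exponential_density b t) \<partial>lborel) + ennreal (1/b) * (\<integral>\<^sup>+t. ennreal (exponential_density b (0 + (-1) * t)) \<partial>lborel)"
    by (simp add: nn_integral_add nn_integral_cmult)
  also have "(\<integral>\<^sup>+t. ennreal (exponential_density b (0 + (-1) * t)) \<partial>lborel) = (\<integral>\<^sup>+t. ennreal (exponential_density b t) \<partial>lborel)"
    using nn_integral_real_affine[of "\<lambda>t. ennreal (exponential_density b t)" "-1" 0] by simp
  also have "(\<integral>\<^sup>+t. ennreal (exponential_density b t) \<partial>lborel) = 1" by (rule nn_integral_exponential_density[OF b])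
  finally have "(\<integral>\<^sup>+t. ennreal (exp (- b * \<bar>t\<bar>)) \<partial>lborel) \<le> ennreal (1/b) + ennreal (1/b)" by simp
  moreover have "ennreal (1/b) + ennreal (1/b) < \<infinity>" by simp
  ultimately show ?thesis by (rule le_less_trans)
qed

lemma sum_abs_le_card_norm: "(\<Sum>i\<in>UNIV. \<bar>(x::real^'n) $ i\<bar>) \<le> real CARD('n) * norm x"
proof -
  have "(\<Sum>i\<in>UNIV. \<bar>x $ i\<bar>) \<le> (\<Sum>i\<in>(UNIV::'n set). norm x)"
    by (intro sum_mono) (simp add: component_le_norm_cart)
  then show ?thesis by simp
qed

lemma integrable_exp_norm_vec:
  fixes a :: real assumes a: "0 < a"
  shows "integrable (lborel::(real^'n) measure) (\<lambda>n. exp (- a * norm n))"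
proof (subst integrable_iff_bounded, safe)
  show "(\<lambda>n. exp (- a * norm n)) \<in> borel_measurable (lborel::(real^'n) measure)" by measurable
  define b where "b = a / real CARD('n)"
  have b: "0 < b" using a by (simp add: b_def)
  have "(\<integral>\<^sup>+n. ennreal (norm (exp (- a * norm (n::real^'n)))) \<partial>lborel) \<le> (\<integral>\<^sup>+n. (\<Prod>i\<in>UNIV. ennreal (exp (- b * \<bar>(n::real^'n) $ i\<bar>))) \<partial>lborel)"
  proof (rule nn_integral_mono)
    fix n :: "real^'n"
    have "(\<Prod>i\<in>UNIV. ennreal (exp (- b * \<bar>n $ i\<bar>))) = ennreal (exp (- b * (\<Sum>i\<in>UNIV. \<bar>n $ i\<bar>)))"
      by (simp add: prod_ennreal exp_sum[symmetric] sum_distrib_left sum_negf)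
    moreover have "exp (- a * norm n) \<le> exp (- b * (\<Sum>i\<in>UNIV. \<bar>n $ i\<bar>))"
    proof -
      have "b * (\<Sum>i\<in>UNIV. \<bar>n $ i\<bar>) \<le> b * (real CARD('n) * norm n)"
        using sum_abs_le_card_norm[of n] b by (intro mult_left_mono) auto
      also have "\<dots> = a * norm n" by (simp add: b_def)
      finally show ?thesis by simp
    qed
    ultimately show "ennreal (norm (exp (- a * norm n))) \<le> (\<Prod>i\<in>UNIV. ennreal (exp (- b * \<bar>n $ i\<bar>)))"
      by simp
  qed
  also have "\<dots> = (\<integral>\<^sup>+t. exp (- b * \<bar>t\<bar>) \<partial>lborel)^CARD('n)"
    by (rule nn_integral_vec_prod) auto
  also have "\<dots> < \<infinity>" using nn_integral_exp_abs_finite[OF b] by (simp add: power_less_top_ennreal)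
  finally show "(\<integral>\<^sup>+n. ennreal (norm (exp (- a * norm (n::real^'n)))) \<partial>lborel) < \<infinity>" .
qed



lemma ndfhl_bound:
  assumes lam: "0 < lam" and u: "0 < u"
  shows "\<exists>B>0. \<forall>n::real^'n. 0 \<le> ndfhl_density d lam u n \<and> ndfhl_density d lam u n \<le> B * exp (- u * norm n)"
proof -
  define \<nu> where "\<nu> = real d / 2"
  have nu0: "0 \<le> \<nu>" by (simp add: \<nu>_def)
  define C0 where "C0 = lam / (2 powr (\<nu> - 1) * pi powr \<nu>)"
  have C0: "0 < C0" using lam by (simp add: C0_def)
  define B where "B = C0 * (u/lam) powr \<nu> * exp (lam * u) * exp ((\<bar>\<nu>\<bar>+1)\<^sup>2 / (u * lam))"
  have B: "0 < B" using C0 lam u by (simp add: B_def)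
  have "0 \<le> ndfhl_density d lam u n \<and> ndfhl_density d lam u n \<le> B * exp (- u * norm n)" for n :: "real^'n"
  proof -
    define \<rho> where "\<rho> = sqrt ((norm n)\<^sup>2 + lam\<^sup>2)"
    have rl: "lam \<le> \<rho>" unfolding \<rho>_def using lam by (intro real_le_rsqrt) simp
    have rn: "norm n \<le> \<rho>" unfolding \<rho>_def by (intro real_le_rsqrt) simp
    have r0: "0 < \<rho>" using rl lam by simp
    have eq: "ndfhl_density d lam u n = C0 * (u / \<rho>) powr \<nu> * exp (lam * u) * besselK \<nu> (u * \<rho>)"
      by (simp add: ndfhl_density_def Let_def C0_def \<nu>_def \<rho>_def)
    have t1: "(u / \<rho>) powr \<nu> \<le> (u/lam) powr \<nu>"
      using u lam rl nu0 by (intro powr_mono2) (auto simp: frac_le)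
    have "besselK \<nu> (u * \<rho>) \<le> exp ((\<bar>\<nu>\<bar>+1)\<^sup>2 / (u * \<rho>) - u * \<rho>)"
      using u r0 by (intro besselK_le) simp
    also have "\<dots> \<le> exp ((\<bar>\<nu>\<bar>+1)\<^sup>2 / (u * lam) - u * norm n)"
    proof -
      have "(\<bar>\<nu>\<bar>+1)\<^sup>2 / (u * \<rho>) \<le> (\<bar>\<nu>\<bar>+1)\<^sup>2 / (u * lam)"
        using u lam rl by (intro divide_left_mono mult_left_mono) auto
      moreover have "u * norm n \<le> u * \<rho>" using u rn by simp
      ultimately show ?thesis by simp
    qed
    also have "\<dots> = exp ((\<bar>\<nu>\<bar>+1)\<^sup>2 / (u * lam)) * exp (- u * norm n)" by (simp add: exp_diff exp_minus field_simps)
    finally have t3: "besselK \<nu> (u * \<rho>) \<le> exp ((\<bar>\<nu>\<bar>+1)\<^sup>2 / (u * lam)) * exp (- u * norm n)" .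
    have "ndfhl_density d lam u n \<le> C0 * (u/lam) powr \<nu> * exp (lam * u) * (exp ((\<bar>\<nu>\<bar>+1)\<^sup>2 / (u * lam)) * exp (- u * norm n))"
      unfolding eq using t1 t3 C0 besselK_nonneg[of \<nu> "u * \<rho>"]
      by (intro mult_mono mult_left_mono) auto
    also have "\<dots> = B * exp (- u * norm n)" by (simp add: B_def)
    finally show ?thesis unfolding eq using C0 besselK_nonneg[of \<nu> "u * \<rho>"] by simp
  qed
  with B show ?thesis by blast
qed

lemma sq_exp_bound:
  fixes s u :: real assumes u: "0 < u" and s: "0 \<le> s"
  shows "s\<^sup>2 * exp (- u * s) \<le> 8 / u\<^sup>2 * exp (- (u/2) * s)"
proof -
  have "1 + u * s/2 + (u * s/2)\<^sup>2/2 \<le> exp (u * s/2)" using u s by (intro exp_lower_Taylor_quadratic) simp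
  moreover have "(u * s/2)\<^sup>2/2 = u\<^sup>2 * s\<^sup>2 / 8" by (simp add: power2_eq_square)
  moreover have "0 \<le> u * s/2" using u s by simp
  ultimately have "u\<^sup>2 * s\<^sup>2 / 8 \<le> exp (u * s/2)" by linarith
  then have "s\<^sup>2 \<le> 8 / u\<^sup>2 * exp (u * s/2)" using u by (simp add: field_simps)
  then have "s\<^sup>2 * exp (- u * s) \<le> 8 / u\<^sup>2 * exp (u * s/2) * exp (- u * s)" by (rule mult_right_mono) auto
  also have "\<dots> = 8 / u\<^sup>2 * exp (- (u/2) * s)" by (simp add: mult_exp_exp)
  finally show ?thesis .
qed

lemma ndfhl_moment2_integrable:
  assumes lam: "0 < lam" and u: "0 < u"
  assumes meas: "(ndfhl_density d lam u :: real^'n \<Rightarrow> real) \<in> borel_measurable borel"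
  shows "integrable (lborel::(real^'n) measure) (\<lambda>n. ndfhl_density d lam u n * (norm n)\<^sup>2)"
proof -
  obtain B where B: "0 < B" and fb: "\<And>n::real^'n. 0 \<le> ndfhl_density d lam u n \<and> ndfhl_density d lam u n \<le> B * exp (- u * norm n)"
    using ndfhl_bound[OF lam u] by blast
  have "integrable (lborel::(real^'n) measure) (\<lambda>n. B * (8 / u\<^sup>2) * exp (- (u/2) * norm n))"
    using u by (intro integrable_mult_right integrable_exp_norm_vec) simp
  then show ?thesis
  proof (rule Bochner_Integration.integrable_bound)
    show "(\<lambda>n. ndfhl_density d lam u n * (norm n)\<^sup>2) \<in> borel_measurable (lborel::(real^'n) measure)"
      using meas by measurable
    show "AE n in lborel. norm (ndfhl_density d lam u n * (norm (n::real^'n))\<^sup>2) \<le> norm (B * (8 / u\<^sup>2) * exp (- (u/2) * norm n))"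
    proof (intro AE_I2)
      fix n :: "real^'n"
      have "ndfhl_density d lam u n * (norm n)\<^sup>2 \<le> B * exp (- u * norm n) * (norm n)\<^sup>2"
        using fb[of n] by (intro mult_right_mono) auto
      also have "\<dots> = B * ((norm n)\<^sup>2 * exp (- u * norm n))" by simp
      also have "\<dots> \<le> B * (8 / u\<^sup>2 * exp (- (u/2) * norm n))"
        using B u by (intro mult_left_mono sq_exp_bound) auto
      finally show "norm (ndfhl_density d lam u n * (norm n)\<^sup>2) \<le> norm (B * (8 / u\<^sup>2) * exp (- (u/2) * norm n))"
        using fb[of n] B by simp
    qed
  qed
qed



lemma norm_sq_vec: "(norm (x::real^'n))\<^sup>2 = (\<Sum>i\<in>UNIV. (x $ i)\<^sup>2)"
  by (simp add: norm_vec_def L2_set_def sum_nonneg)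

lemma gauss_closed:
  fixes x :: "real^'n" assumes v: "0 < v"
  shows "gauss_density v x = exp (- (norm x)\<^sup>2 / (2 * v)) / sqrt (2 * pi * v) ^ CARD('n)"
proof -
  have "gauss_density v x = (\<Prod>i\<in>UNIV. exp (- (x $ i)\<^sup>2 / (2 * v)) / sqrt (2 * pi * v))"
    unfolding gauss_density_def normal_density_def using v by (intro prod.cong) auto
  also have "\<dots> = (\<Prod>i\<in>UNIV. exp (- (x $ i)\<^sup>2 / (2 * v))) / sqrt (2 * pi * v) ^ CARD('n)"
    by (simp add: prod_dividef)
  also have "(\<Prod>i\<in>UNIV. exp (- (x $ i)\<^sup>2 / (2 * v))) = exp (- (norm x)\<^sup>2 / (2 * v))"
    by (simp add: exp_sum[symmetric] norm_sq_vec sum_divide_distrib sum_negf)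
  finally show ?thesis .
qed

lemma gauss_pos: "0 < v \<Longrightarrow> 0 < gauss_density v (x::real^'n)"
  by (simp add: gauss_closed)

lemma gauss_le: "0 < v \<Longrightarrow> gauss_density v (x::real^'n) \<le> 1 / sqrt (2 * pi * v) ^ CARD('n)"
  by (simp add: gauss_closed divide_right_mono)

lemma gauss_measurable[measurable]: "gauss_density v \<in> borel_measurable (borel :: (real^'n) measure)"
  unfolding gauss_density_def[abs_def] by measurable

lemma nn_integral_normal_density: "0 < \<sigma> \<Longrightarrow> (\<integral>\<^sup>+t. ennreal (normal_density \<mu> \<sigma> t) \<partial>lborel) = 1"
proof -
  assume "0 < \<sigma>"
  interpret prob_space "density lborel (normal_density \<mu> \<sigma>)" using \<open>0 < \<sigma>\<close> by (rule prob_space_normal_density)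
  have "emeasure (density lborel (normal_density \<mu> \<sigma>)) UNIV = 1" using emeasure_space_1 by simp
  then show ?thesis by (simp add: emeasure_density)
qed

lemma gauss_nn_integral: "0 < v \<Longrightarrow> (\<integral>\<^sup>+x. ennreal (gauss_density v x) \<partial>(lborel::(real^'n) measure)) = 1"
proof -
  assume "0 < v"
  have "(\<integral>\<^sup>+x. ennreal (gauss_density v x) \<partial>(lborel::(real^'n) measure)) =
        (\<integral>\<^sup>+x. (\<Prod>i\<in>UNIV. ennreal (normal_density 0 (sqrt v) ((x::real^'n) $ i))) \<partial>lborel)"
    unfolding gauss_density_def by (simp add: prod_ennreal)
  also have "\<dots> = 1" using \<open>0 < v\<close> by (subst nn_integral_vec_prod) (auto simp: nn_integral_normal_density)
  finally show ?thesis .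
qed

lemma gauss_integrable: "0 < v \<Longrightarrow> integrable (lborel::(real^'n) measure) (gauss_density v)"
  by (subst integrable_iff_bounded) (auto simp: gauss_density_def prod_nonneg gauss_nn_integral[unfolded gauss_density_def])

lemma gauss_moment_integrable:
  assumes v: "0 < v"
  shows "integrable (lborel::(real^'n) measure) (\<lambda>x. gauss_density v x * (norm x)\<^sup>2)"
proof -
  define C where "C = 4 * v * (sqrt (2 * pi * (2 * v)) ^ CARD('n) / sqrt (2 * pi * v) ^ CARD('n))"
  have "integrable (lborel::(real^'n) measure) (\<lambda>x. C * gauss_density (2 * v) x)"
    using v by (intro integrable_mult_right gauss_integrable) simp
  then show ?thesis
  proof (rule Bochner_Integration.integrable_bound)
    show "(\<lambda>x. gauss_density v x * (norm x)\<^sup>2) \<in> borel_measurable (lborel::(real^'n) measure)" by measurable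
    show "AE x in lborel. norm (gauss_density v x * (norm (x::real^'n))\<^sup>2) \<le> norm (C * gauss_density (2 * v) x)"
    proof (intro AE_I2)
      fix x :: "real^'n"
      define s where "s = (norm x)\<^sup>2"
      have s0: "0 \<le> s" by (simp add: s_def)
      have "1 + s / (4 * v) \<le> exp (s / (4 * v))" by (rule exp_ge_add_one_self)
      then have "s \<le> 4 * v * exp (s / (4 * v))" using v s0 by (simp add: field_simps)
      then have "s * exp (- s / (2 * v)) \<le> 4 * v * exp (s / (4 * v)) * exp (- s / (2 * v))"
        by (rule mult_right_mono) simp
      also have "\<dots> = 4 * v * exp (- s / (2 * (2 * v)))"
        using v by (simp add: mult_exp_exp)
      finally have *: "s * exp (- s / (2 * v)) \<le> 4 * v * exp (- s / (2 * (2 * v)))" .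
      have "gauss_density v x * (norm x)\<^sup>2 = s * exp (- s / (2 * v)) / sqrt (2 * pi * v) ^ CARD('n)"
        using v by (simp add: gauss_closed s_def)
      also have "\<dots> \<le> 4 * v * exp (- s / (2 * (2 * v))) / sqrt (2 * pi * v) ^ CARD('n)"
        using * v by (intro divide_right_mono) auto
      also have "\<dots> = C * gauss_density (2 * v) x"
        using v by (simp add: gauss_closed C_def s_def)
      finally show "norm (gauss_density v x * (norm x)\<^sup>2) \<le> norm (C * gauss_density (2 * v) x)"
        using v gauss_pos[OF v, of x] by simp
    qed
  qed
qed

lemma nn_integral_lborel_shift:
  fixes f :: "'a::euclidean_space \<Rightarrow> ennreal"
  assumes [measurable]: "f \<in> borel_measurable borel"
  shows "(\<integral>\<^sup>+x. f (c + x) \<partial>lborel) = (\<integral>\<^sup>+x. f x \<partial>lborel)"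
proof -
  have "(\<integral>\<^sup>+x. f x \<partial>lborel) = (\<integral>\<^sup>+x. f x \<partial>(distr lborel borel ((+) c)))"
    by (simp add: lborel_distr_plus)
  also have "\<dots> = (\<integral>\<^sup>+x. f (c + x) \<partial>lborel)" by (simp add: nn_integral_distr)
  finally show ?thesis ..
qed

lemma nn_integral_lborel_reflect:
  fixes f :: "'a::euclidean_space \<Rightarrow> ennreal"
  assumes [measurable]: "f \<in> borel_measurable borel"
  shows "(\<integral>\<^sup>+x. f (c - x) \<partial>lborel) = (\<integral>\<^sup>+x. f x \<partial>lborel)"
proof -
  have eq: "lborel = density (distr lborel borel (\<lambda>x. c + (-1::real) *\<^sub>R x)) (\<lambda>_. 1)"
    using lborel_affine[of "-1::real" c] by simp
  have "(\<integral>\<^sup>+x. f x \<partial>lborel) = (\<integral>\<^sup>+x. f x \<partial>(density (distr lborel borel (\<lambda>x. c + (-1::real) *\<^sub>R x)) (\<lambda>_. 1)))"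
    by (subst eq[symmetric]) (rule refl)
  also have "\<dots> = (\<integral>\<^sup>+x. f (c - x) \<partial>lborel)" by (simp add: nn_integral_density nn_integral_distr)
  finally show ?thesis ..
qed



lemma (in prob_space) indep_var_lborel_iff:
  "indep_var lborel X lborel Y \<longleftrightarrow> indep_var borel X borel Y"
  by (simp add: indep_var_eq)

lemma (in prob_space) mi_lborel:
  "mutual_information b borel borel X Y = mutual_information b lborel lborel X Y"
proof -
  have 1: "distr M borel X = distr M lborel X" "distr M borel Y = distr M lborel Y"
    by (rule distr_cong; auto)+
  have 2: "distr M (borel \<Otimes>\<^sub>M borel) (\<lambda>x. (X x, Y x)) = distr M (lborel \<Otimes>\<^sub>M lborel) (\<lambda>x. (X x, Y x))"
    by (rule distr_cong) (auto intro!: sets_pair_measure_cong)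
  show ?thesis unfolding mutual_information_def 1 2 ..
qed

lemma shear_distributed:
  fixes X N :: "'a \<Rightarrow> 'b::euclidean_space"
  assumes XN: "distributed M (lborel \<Otimes>\<^sub>M lborel) (\<lambda>\<omega>. (X \<omega>, N \<omega>)) g"
  shows "distributed M (lborel \<Otimes>\<^sub>M lborel) (\<lambda>\<omega>. (X \<omega>, X \<omega> + N \<omega>)) (\<lambda>z. g (fst z, snd z - fst z))"
proof -
  let ?L = "lborel \<Otimes>\<^sub>M lborel :: ('b \<times> 'b) measure"
  have XNm[measurable]: "(\<lambda>\<omega>. (X \<omega>, N \<omega>)) \<in> measurable M ?L" and gm[measurable]: "g \<in> borel_measurable ?L"
    and eq: "distr M ?L (\<lambda>\<omega>. (X \<omega>, N \<omega>)) = density ?L g"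
    using XN by (auto simp: distributed_def)
  define T where "T = (\<lambda>z::'b\<times>'b. (fst z, fst z + snd z))"
  have Tm[measurable]: "T \<in> measurable ?L ?L"
    unfolding T_def lborel_prod measurable_lborel1 measurable_lborel2 by (intro borel_measurable_continuous_onI continuous_intros)
  have g'm[measurable]: "(\<lambda>z. g (fst z, snd z - fst z)) \<in> borel_measurable ?L"
    by measurable
  have "(\<lambda>\<omega>. (X \<omega>, X \<omega> + N \<omega>)) = T \<circ> (\<lambda>\<omega>. (X \<omega>, N \<omega>))" by (auto simp: T_def)
  then have XYm: "(\<lambda>\<omega>. (X \<omega>, X \<omega> + N \<omega>)) \<in> measurable M ?L" by simp
  have "distr M ?L (\<lambda>\<omega>. (X \<omega>, X \<omega> + N \<omega>)) = distr (distr M ?L (\<lambda>\<omega>. (X \<omega>, N \<omega>))) ?L T"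
    by (subst distr_distr) (auto simp: T_def comp_def)
  also have "\<dots> = distr (density ?L g) ?L T" by (simp add: eq)
  also have "\<dots> = density ?L (\<lambda>z. g (fst z, snd z - fst z))"
  proof (rule measure_eqI)
    fix A assume A: "A \<in> sets (distr (density ?L g) ?L T)"
    then have A[measurable]: "A \<in> sets ?L" by simp
    have TA: "T -` A \<inter> space ?L \<in> sets ?L" using Tm A by (rule measurable_sets)
    have "emeasure (distr (density ?L g) ?L T) A = emeasure (density ?L g) (T -` A \<inter> space ?L)"
      using Tm A by (subst emeasure_distr) auto
    also have "\<dots> = (\<integral>\<^sup>+z. g z * indicator (T -` A \<inter> space ?L) z \<partial>?L)"
      using TA by (simp add: emeasure_density)
    also have "\<dots> = (\<integral>\<^sup>+z. g z * indicator A (T z) \<partial>?L)"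
      by (intro nn_integral_cong) (auto simp: space_pair_measure split: split_indicator)
    finally have "emeasure (distr (density ?L g) ?L T) A = (\<integral>\<^sup>+z. g z * indicator A (T z) \<partial>?L)" .
    also have "\<dots> = (\<integral>\<^sup>+x. \<integral>\<^sup>+n. g (x, n) * indicator A (x, x + n) \<partial>lborel \<partial>lborel)"
      by (subst lborel.nn_integral_fst[symmetric]) (auto simp: T_def)
    also have "\<dots> = (\<integral>\<^sup>+x. \<integral>\<^sup>+y. g (x, y - x) * indicator A (x, y) \<partial>lborel \<partial>lborel)"
    proof -
      have sh: "(\<integral>\<^sup>+n. g (x, n) * indicator A (x, x + n) \<partial>lborel) = (\<integral>\<^sup>+y. g (x, y - x) * indicator A (x, y) \<partial>lborel)" for x :: 'b
        using nn_integral_lborel_shift[of "\<lambda>y. g (x, y - x) * indicator A (x, y)" x] by simp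
      show ?thesis by (simp only: sh)
    qed
    also have "\<dots> = (\<integral>\<^sup>+z. g (fst z, snd z - fst z) * indicator A z \<partial>?L)"
      by (subst lborel.nn_integral_fst[symmetric]) auto
    also have "\<dots> = emeasure (density ?L (\<lambda>z. g (fst z, snd z - fst z))) A"
      using A by (subst emeasure_density) auto
    finally show "emeasure (distr (density ?L g) ?L T) A = emeasure (density ?L (\<lambda>z. g (fst z, snd z - fst z))) A" .
  qed simp
  finally show ?thesis using XYm g'm by (simp add: distributed_def)
qed



lemma pointwise_lower:
  fixes a Px Py G K :: real
  assumes a: "0 \<le> a" and Px: "0 < Px" and Py: "0 < Py" and G: "0 < G" and K: "K \<le> ln G - ln Px"
  shows "a * (K + 1) - Py * G \<le> a * ln (a / (Px * Py))"
proof (cases "a = 0")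
  case True then show ?thesis using Py G by simp
next
  case False
  with a have a0: "0 < a" by simp
  have "ln (Py * G / a) \<le> Py * G / a - 1" using Py G a0 by (intro ln_le_minus_one) simp
  then have "ln Py + ln G - ln a \<le> Py * G / a - 1" using Py G a0 by (simp add: ln_div ln_mult)
  then have "a * (ln Py + ln G - ln a) \<le> a * (Py * G / a - 1)" using a0 by (intro mult_left_mono) auto
  moreover have "a * (Py * G / a - 1) = Py * G - a" using a0 by (simp add: field_simps)
  ultimately have 1: "a * (ln Py + ln G - ln a) \<le> Py * G - a" by simp
  have "a * K \<le> a * (ln G - ln Px)" using a0 K by (intro mult_left_mono) auto
  moreover have "ln (a / (Px * Py)) = ln a - ln Px - ln Py" using a0 Px Py by (simp add: ln_div ln_mult)
  ultimately have "a * ln (a / (Px * Py)) = a * ln a - a * ln Px - a * ln Py" and "a * K \<le> a * ln G - a * ln Px"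
    by (simp_all add: right_diff_distrib)
  then show ?thesis using 1 by (simp add: algebra_simps)
qed

lemma pointwise_upper:
  fixes a Px Py f BN W :: real
  assumes a: "a = Px * f" and f: "0 \<le> f" "f \<le> BN" and Px: "0 < Px" and Py: "0 < Py" and BN: "0 < BN"
    and W: "- ln Py \<le> W"
  shows "a * ln (a / (Px * Py)) \<le> a * (ln BN + W)"
proof (cases "f = 0")
  case True then show ?thesis using a by simp
next
  case False
  with f have f0: "0 < f" by simp
  have "a / (Px * Py) = f / Py" using a Px by simp
  then have "ln (a / (Px * Py)) = ln f - ln Py" using f0 Py by (simp add: ln_div)
  also have "\<dots> \<le> ln BN + W" using f0 f W ln_le_cancel_iff[of f BN] BN by linarith
  finally show ?thesis using a Px f0 by (intro mult_left_mono) auto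
qed

lemma ln_sqrt_pow: "0 < x \<Longrightarrow> ln (sqrt x ^ k) = real k / 2 * ln x"
  by (simp add: ln_realpow ln_sqrt)

lemma gauss_ln_diff:
  fixes x y :: "real^'n" assumes v: "0 < v"
  shows "real CARD('n) / 2 * ln v - (norm (x - y))\<^sup>2 / 2 \<le> ln (gauss_density 1 (x - y)) - ln (gauss_density v x)"
proof -
  let ?p = "CARD('n)"
  have g1: "ln (gauss_density 1 (x - y)) = - (norm (x - y))\<^sup>2 / 2 - real ?p / 2 * ln (2 * pi)"
    by (simp add: gauss_closed ln_div ln_sqrt_pow)
  have "ln (gauss_density v x) \<le> ln (1 / sqrt (2 * pi * v) ^ ?p)"
    using gauss_le[OF v, of x] gauss_pos[OF v, of x] v by (subst ln_le_cancel_iff) auto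
  also have "\<dots> = - (real ?p / 2 * (ln (2 * pi) + ln v))"
    using v by (simp add: ln_div ln_sqrt_pow ln_mult)
  finally show ?thesis using g1 by (simp add: algebra_simps)
qed

lemma (in prob_space) distributed_total:
  assumes "distributed M N X f"
  shows "(\<integral>\<^sup>+x. f x \<partial>N) = 1"
proof -
  have "(\<integral>\<^sup>+x. f x * 1 \<partial>N) = (\<integral>\<^sup>+x. 1 \<partial>M)"
    using assms by (rule distributed_nn_integral) simp
  then show ?thesis by (simp add: emeasure_space_1)
qed



theorem lemma6:
  fixes lam u :: real
  assumes "lam > 0" and "u > 0"
  shows "\<exists>c::real. \<forall>\<^sub>F P in at_top.
    \<forall>(M::'a measure) (X::'a \<Rightarrow> real^'n) (N::'a \<Rightarrow> real^'n).
      prob_space M \<and>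
      prob_space.indep_var M borel X borel N \<and>
      distributed M lborel X (\<lambda>x. ennreal (gauss_density (P / real CARD('n)) x)) \<and>
      distributed M lborel N (\<lambda>n. ennreal (ndfhl_density (CARD('n) + 1) lam u n))
      \<longrightarrow> prob_space.mutual_information M (exp 1) borel borel X (\<lambda>\<omega>. X \<omega> + N \<omega>)
            \<ge> real CARD('n) / 2 * ln P - c"
proof -
  let ?p = "CARD('n)"
  define fN :: "real^'n \<Rightarrow> real" where "fN = ndfhl_density (CARD('n) + 1) lam u"
  define m2 where "m2 = (\<integral>n. fN n * (norm n)\<^sup>2 \<partial>lborel)"
  define c where "c = real ?p / 2 * ln (real ?p) + m2 / 2"
  obtain BN where BN: "0 < BN" and fNb: "\<And>n. 0 \<le> fN n \<and> fN n \<le> BN * exp (- u * norm n)"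
    using ndfhl_bound[OF assms] unfolding fN_def by blast
  have fN_nn: "0 \<le> fN n" for n using fNb by blast
  have fN_le: "fN n \<le> BN" for n
  proof -
    have "BN * exp (- u * norm n) \<le> BN * 1" using BN assms by (intro mult_left_mono) auto
    then show ?thesis using fNb[of n] by simp
  qed
  show ?thesis
  proof (intro exI[of _ c], rule eventually_mono[OF eventually_ge_at_top[of "max 1 (2 * real ?p * m2 + 1)"]], intro allI impI)
    fix P :: real and M :: "'a measure" and X N :: "'a \<Rightarrow> real^'n"
    assume P: "max 1 (2 * real ?p * m2 + 1) \<le> P"
    assume H: "prob_space M \<and> prob_space.indep_var M borel X borel N \<and>
      distributed M lborel X (\<lambda>x. ennreal (gauss_density (P / real CARD('n)) x)) \<and>
      distributed M lborel N (\<lambda>n. ennreal (ndfhl_density (CARD('n) + 1) lam u n))"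
    interpret prob_space M using H by blast
    interpret information_space M "exp 1" by unfold_locales simp
    define v where "v = P / real ?p"
    have P0: "0 < P" using P by simp
    have v0: "0 < v" using P0 by (simp add: v_def)
    have vm2: "2 * m2 < v"
    proof -
      have "2 * real ?p * m2 < P" using P by simp
      then have "real ?p * (2 * m2) < real ?p * v" using P0 by (simp add: v_def)
      then show ?thesis by simp
    qed
    define fX :: "real^'n \<Rightarrow> real" where "fX = gauss_density v"
    have indep: "indep_var lborel X lborel N" using H by (simp add: indep_var_lborel_iff)
    have HX: "distributed M lborel X (\<lambda>x. ennreal (fX x))" using H by (simp add: fX_def v_def)
    have HN: "distributed M lborel N (\<lambda>n. ennreal (fN n))" using H by (simp add: fN_def)
    have fX_pos: "0 < fX x" for x using v0 by (simp add: fX_def gauss_pos)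
    have fX_nn: "0 \<le> fX x" for x using fX_pos[of x] by simp
    have fX_le: "fX x \<le> 1 / sqrt (2 * pi * v) ^ ?p" for x unfolding fX_def by (rule gauss_le[OF v0])
    have fNm[measurable]: "fN \<in> borel_measurable borel"
      using distributed_real_measurable[OF _ HN] fN_nn by simp
    have fXm[measurable]: "fX \<in> borel_measurable borel" by (simp add: fX_def)
    have Xm[measurable]: "X \<in> borel_measurable M" using distributed_measurable[OF HX] by simp
    have Nm[measurable]: "N \<in> borel_measurable M" using distributed_measurable[OF HN] by simp
    have fN2: "integrable lborel (\<lambda>n::real^'n. fN n * (norm n)\<^sup>2)"
      unfolding fN_def by (rule ndfhl_moment2_integrable[OF assms fNm[unfolded fN_def]])
    have N2: "integrable M (\<lambda>\<omega>. (norm (N \<omega>))\<^sup>2)"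
      using distributed_integrable[OF HN, of "\<lambda>n. (norm n)\<^sup>2"] fN2 fN_nn by simp
    have EN2: "(\<integral>\<omega>. (norm (N \<omega>))\<^sup>2 \<partial>M) = m2"
      using distributed_integral[OF HN, of "\<lambda>n. (norm n)\<^sup>2"] fN_nn unfolding m2_def by simp
    have fX2: "integrable lborel (\<lambda>x::real^'n. fX x * (norm x)\<^sup>2)"
      unfolding fX_def by (rule gauss_moment_integrable[OF v0])
    have X2: "integrable M (\<lambda>\<omega>. (norm (X \<omega>))\<^sup>2)"
      using distributed_integrable[OF HX, of "\<lambda>n. (norm n)\<^sup>2"] fX2 fX_nn by simp
    define Pxy where "Pxy = (\<lambda>z::(real^'n)\<times>(real^'n). fX (fst z) * fN (snd z - fst z))"
    have Pxy_nn: "0 \<le> Pxy z" for z by (simp add: Pxy_def fX_nn fN_nn)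
    have Pxym[measurable]: "Pxy \<in> borel_measurable (lborel \<Otimes>\<^sub>M lborel)" unfolding Pxy_def by measurable
    have HXN: "distributed M (lborel \<Otimes>\<^sub>M lborel) (\<lambda>\<omega>. (X \<omega>, N \<omega>)) (\<lambda>(x, y). ennreal (fX x) * ennreal (fN y))"
      using distributed_joint_indep[OF lborel.sigma_finite_measure_axioms lborel.sigma_finite_measure_axioms HX HN indep] .
    have HXY: "distributed M (lborel \<Otimes>\<^sub>M lborel) (\<lambda>\<omega>. (X \<omega>, X \<omega> + N \<omega>)) (\<lambda>z. ennreal (Pxy z))"
      using shear_distributed[OF HXN] by (simp add: Pxy_def ennreal_mult fX_nn fN_nn split_beta')
    define Py where "Py = (\<lambda>y. \<integral>\<omega>. fX (y - N \<omega>) \<partial>M)"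
    have Py_int: "integrable M (\<lambda>\<omega>. fX (y - N \<omega>))" for y
    proof (rule integrable_const_bound[where B="1 / sqrt (2 * pi * v) ^ ?p"])
      show "AE \<omega> in M. norm (fX (y - N \<omega>)) \<le> 1 / sqrt (2 * pi * v) ^ ?p"
        using fX_le fX_nn by (intro AE_I2) (simp add: abs_of_nonneg)
    qed measurable
    have Py_nn: "0 \<le> Py y" for y unfolding Py_def by (rule integral_nonneg_AE) (simp add: fX_nn)
    have Py_eq: "ennreal (Py y) = (\<integral>\<^sup>+x. ennreal (Pxy (x, y)) \<partial>lborel)" for y
    proof -
      have "(\<integral>\<^sup>+x. ennreal (Pxy (x, y)) \<partial>lborel) = (\<integral>\<^sup>+n. ennreal (Pxy (y - n, y)) \<partial>lborel)"
        by (rule nn_integral_lborel_reflect[symmetric, of "\<lambda>x. ennreal (Pxy (x, y))"]) measurable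
      also have "\<dots> = (\<integral>\<^sup>+n. ennreal (fN n) * ennreal (fX (y - n)) \<partial>lborel)"
        by (simp add: Pxy_def ennreal_mult[symmetric] fX_nn fN_nn mult.commute)
      also have "\<dots> = (\<integral>\<^sup>+\<omega>. ennreal (fX (y - N \<omega>)) \<partial>M)"
        by (rule distributed_nn_integral[OF HN]) measurable
      also have "\<dots> = ennreal (Py y)"
        unfolding Py_def using Py_int[of y] fX_nn by (intro nn_integral_eq_integral) auto
      finally show ?thesis ..
    qed
    have HY: "distributed M lborel (\<lambda>\<omega>. X \<omega> + N \<omega>) (\<lambda>y. ennreal (Py y))"
      using distr_marginal2[OF lborel.sigma_finite_measure_axioms lborel.sigma_finite_measure_axioms HXY]
      by (simp add: Py_eq)
    have Pym[measurable]: "Py \<in> borel_measurable borel"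
      using distributed_real_measurable[OF _ HY] Py_nn by simp
    define S where "S = sqrt (2 * pi * v) ^ ?p"
    have S0: "0 < S" using v0 by (simp add: S_def)
    have fX_closed: "fX x = exp (- (norm x)\<^sup>2 / (2 * v)) / S" for x
      unfolding fX_def S_def by (rule gauss_closed[OF v0])
    have lowpt: "exp (- (norm y)\<^sup>2 / v) / S * (1 - (norm n)\<^sup>2 / v) \<le> fX (y - n)" for y n :: "real^'n"
    proof -
      have "(norm (y - n))\<^sup>2 \<le> (norm y + norm n)\<^sup>2"
        using norm_triangle_ineq4[of y n] by (intro power_mono) auto
      also have "\<dots> \<le> 2 * (norm y)\<^sup>2 + 2 * (norm n)\<^sup>2"
        using zero_le_power2[of "norm y - norm n"] by (simp add: power2_eq_square algebra_simps)
      finally have "(norm (y - n))\<^sup>2 / (2 * v) \<le> (2 * (norm y)\<^sup>2 + 2 * (norm n)\<^sup>2) / (2 * v)"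
        using v0 by (intro divide_right_mono) auto
      also have "\<dots> = (norm y)\<^sup>2 / v + (norm n)\<^sup>2 / v" using v0 by (simp add: field_simps)
      finally have "- (norm y)\<^sup>2 / v + - (norm n)\<^sup>2 / v \<le> - (norm (y - n))\<^sup>2 / (2 * v)"
        by simp
      then have "exp (- (norm y)\<^sup>2 / v) * exp (- (norm n)\<^sup>2 / v) \<le> exp (- (norm (y - n))\<^sup>2 / (2 * v))"
        by (simp add: mult_exp_exp)
      moreover have "1 - (norm n)\<^sup>2 / v \<le> exp (- (norm n)\<^sup>2 / v)"
        using exp_ge_add_one_self[of "- (norm n)\<^sup>2 / v"] by simp
      ultimately have "exp (- (norm y)\<^sup>2 / v) * (1 - (norm n)\<^sup>2 / v) \<le> exp (- (norm (y - n))\<^sup>2 / (2 * v))"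
        by (smt (verit) exp_gt_zero mult_left_mono)
      then show ?thesis using S0 by (simp add: fX_closed divide_right_mono)
    qed
    have Py_low: "exp (- (norm y)\<^sup>2 / v) / (2 * S) \<le> Py y" for y
    proof -
      define e where "e = exp (- (norm y)\<^sup>2 / v) / S"
      have e0: "0 < e" using S0 by (simp add: e_def)
      have int2: "integrable M (\<lambda>\<omega>. e * (1 - (norm (N \<omega>))\<^sup>2 / v))"
        using N2 by (intro integrable_mult_right integrable_diff integrable_divide) auto
      have I1: "(\<integral>\<omega>. e * (1 - (norm (N \<omega>))\<^sup>2 / v) \<partial>M) = e * (1 - m2 / v)"
        using N2 EN2 by (simp add: integral_diff prob_space)
      have I2: "e / 2 \<le> e * (1 - m2 / v)"
      proof -
        have "m2 / v \<le> 1/2" using vm2 v0 by (simp add: field_simps)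
        then have "e * (1/2) \<le> e * (1 - m2 / v)" using e0 by (intro mult_left_mono) auto
        then show ?thesis by simp
      qed
      have I3: "(\<integral>\<omega>. e * (1 - (norm (N \<omega>))\<^sup>2 / v) \<partial>M) \<le> Py y"
        unfolding Py_def using int2 Py_int[of y] lowpt by (intro integral_mono) (auto simp: e_def)
      have "exp (- (norm y)\<^sup>2 / v) / (2 * S) = e / 2" by (simp add: e_def)
      with I1 I2 I3 show ?thesis by linarith
    qed
    have Py_pos: "0 < Py y" for y using Py_low[of y] S0 by (smt (verit) divide_pos_pos exp_gt_zero)
    have negln: "- ln (Py y) \<le> ln (2 * S) + (norm y)\<^sup>2 / v" for y
    proof -
      have "ln (exp (- (norm y)\<^sup>2 / v) / (2 * S)) \<le> ln (Py y)"
        using Py_low[of y] S0 Py_pos[of y] by (subst ln_le_cancel_iff) auto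
      then show ?thesis using S0 by (simp add: ln_div)
    qed
    let ?L = "lborel \<Otimes>\<^sub>M lborel :: ((real^'n) \<times> (real^'n)) measure"
    define F where "F = (\<lambda>z. Pxy z * log (exp 1) (Pxy z / (fX (fst z) * Py (snd z))))"
    have MI: "mutual_information (exp 1) lborel lborel X (\<lambda>\<omega>. X \<omega> + N \<omega>) = integral\<^sup>L ?L F"
      unfolding F_def
      by (rule mutual_information_distr[OF lborel.sigma_finite_measure_axioms lborel.sigma_finite_measure_axioms HX _ HY _ HXY])
         (auto simp: fX_nn Py_nn Pxy_nn)
    have Fm[measurable]: "F \<in> borel_measurable ?L" unfolding F_def by measurable
    define G1 :: "real^'n \<Rightarrow> real" where "G1 = gauss_density 1"
    have G1_pos: "0 < G1 x" for x by (simp add: G1_def gauss_pos)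
    have G1m[measurable]: "G1 \<in> borel_measurable borel" by (simp add: G1_def)
    define K where "K = real ?p / 2 * ln v"
    define L where "L = (\<lambda>z. Pxy z * (K - (norm (snd z - fst z))\<^sup>2 / 2 + 1) - Py (snd z) * G1 (fst z - snd z))"
    define U where "U = (\<lambda>z. Pxy z * (ln BN + (ln (2 * S) + (norm (snd z))\<^sup>2 / v)))"
    have FL: "L z \<le> F z" for z
    proof -
      obtain x y where z: "z = (x, y)" by (cases z)
      have "K - (norm (y - x))\<^sup>2 / 2 \<le> ln (G1 (x - y)) - ln (fX x)"
        using gauss_ln_diff[OF v0, of x y] by (simp add: K_def G1_def fX_def norm_minus_commute)
      then show ?thesis unfolding L_def F_def z
        by (simp add: log_def) (rule pointwise_lower[OF Pxy_nn fX_pos Py_pos G1_pos])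
    qed
    have FU: "F z \<le> U z" for z
    proof -
      obtain x y where z: "z = (x, y)" by (cases z)
      show ?thesis unfolding U_def F_def z
        by (simp add: log_def) (rule pointwise_upper[OF _ fN_nn[of "y - x"] fN_le[of "y - x"] fX_pos Py_pos BN negln], simp add: Pxy_def)
    qed
    have hN: "(\<lambda>\<omega>. K - (norm (snd (X \<omega>, X \<omega> + N \<omega>) - fst (X \<omega>, X \<omega> + N \<omega>)))\<^sup>2 / 2 + 1) = (\<lambda>\<omega>. K - (norm (N \<omega>))\<^sup>2 / 2 + 1)"
      by simp
    have intN: "integrable M (\<lambda>\<omega>. K - (norm (N \<omega>))\<^sup>2 / 2 + 1)"
      using N2 by auto
    have intL1: "integrable ?L (\<lambda>z. Pxy z * (K - (norm (snd z - fst z))\<^sup>2 / 2 + 1))"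
      using distributed_integrable[OF HXY, of "\<lambda>z. K - (norm (snd z - fst z))\<^sup>2 / 2 + 1"] Pxy_nn intN
      by (simp add: hN)
    have valL1: "(\<integral>z. Pxy z * (K - (norm (snd z - fst z))\<^sup>2 / 2 + 1) \<partial>?L) = K - m2 / 2 + 1"
    proof -
      have "(\<integral>z. Pxy z * (K - (norm (snd z - fst z))\<^sup>2 / 2 + 1) \<partial>?L) = (\<integral>\<omega>. K - (norm (N \<omega>))\<^sup>2 / 2 + 1 \<partial>M)"
        using distributed_integral[OF HXY, of "\<lambda>z. K - (norm (snd z - fst z))\<^sup>2 / 2 + 1"] Pxy_nn
        by (simp add: hN)
      also have "\<dots> = K - m2 / 2 + 1" using N2 EN2 by (simp add: integral_diff prob_space)
      finally show ?thesis .
    qed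
    have nnL2: "(\<integral>\<^sup>+z. ennreal (Py (snd z) * G1 (fst z - snd z)) \<partial>?L) = 1"
    proof -
      have "(\<integral>\<^sup>+z. ennreal (Py (snd z) * G1 (fst z - snd z)) \<partial>?L) =
            (\<integral>\<^sup>+y. \<integral>\<^sup>+x. ennreal (Py y * G1 (x - y)) \<partial>lborel \<partial>lborel)"
        by (subst lborel_pair.nn_integral_snd[symmetric]) auto
      also have "\<dots> = (\<integral>\<^sup>+y. ennreal (Py y) \<partial>lborel)"
      proof (intro nn_integral_cong)
        fix y :: "real^'n"
        have "(\<integral>\<^sup>+x. ennreal (G1 (- y + x)) \<partial>lborel) = (\<integral>\<^sup>+x. ennreal (G1 x) \<partial>lborel)"
          by (rule nn_integral_lborel_shift) measurable
        also have "\<dots> = 1" unfolding G1_def by (rule gauss_nn_integral) simp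
        finally have 1: "(\<integral>\<^sup>+x. ennreal (G1 (x - y)) \<partial>lborel) = 1" by simp
        have "(\<integral>\<^sup>+x. ennreal (Py y * G1 (x - y)) \<partial>lborel) = (\<integral>\<^sup>+x. ennreal (Py y) * ennreal (G1 (x - y)) \<partial>lborel)"
          using Py_nn G1_pos by (intro nn_integral_cong) (simp add: ennreal_mult less_imp_le)
        also have "\<dots> = ennreal (Py y) * (\<integral>\<^sup>+x. ennreal (G1 (x - y)) \<partial>lborel)"
          by (rule nn_integral_cmult) measurable
        finally show "(\<integral>\<^sup>+x. ennreal (Py y * G1 (x - y)) \<partial>lborel) = ennreal (Py y)" using 1 by simp
      qed
      also have "\<dots> = 1" using distributed_total[OF HY] .
      finally show ?thesis .
    qed
    have L2m[measurable]: "(\<lambda>z. Py (snd z) * G1 (fst z - snd z)) \<in> borel_measurable ?L" by measurable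
    have L2nn: "0 \<le> Py (snd z) * G1 (fst z - snd z)" for z using Py_nn G1_pos by (simp add: less_imp_le)
    have intL2: "integrable ?L (\<lambda>z. Py (snd z) * G1 (fst z - snd z))"
      using nnL2 L2nn by (subst integrable_iff_bounded) (auto simp: abs_of_nonneg)
    have valL2: "(\<integral>z. Py (snd z) * G1 (fst z - snd z) \<partial>?L) = 1"
      using nnL2 L2nn by (subst integral_eq_nn_integral) auto
    have intL: "integrable ?L L" unfolding L_def using intL1 intL2 by (rule Bochner_Integration.integrable_diff)
    have valL: "integral\<^sup>L ?L L = K - m2 / 2"
      unfolding L_def using intL1 intL2 valL1 valL2 by (simp add: integral_diff)
    have intU: "integrable ?L U"
    proof -
      have "integrable M (\<lambda>\<omega>. (norm (X \<omega> + N \<omega>))\<^sup>2)"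
      proof (rule Bochner_Integration.integrable_bound)
        show "integrable M (\<lambda>\<omega>. 2 * (norm (X \<omega>))\<^sup>2 + 2 * (norm (N \<omega>))\<^sup>2)" using X2 N2 by auto
        show "(\<lambda>\<omega>. (norm (X \<omega> + N \<omega>))\<^sup>2) \<in> borel_measurable M" by measurable
        show "AE \<omega> in M. norm ((norm (X \<omega> + N \<omega>))\<^sup>2) \<le> norm (2 * (norm (X \<omega>))\<^sup>2 + 2 * (norm (N \<omega>))\<^sup>2)"
        proof (intro AE_I2)
          fix \<omega>
          have "(norm (X \<omega> + N \<omega>))\<^sup>2 \<le> (norm (X \<omega>) + norm (N \<omega>))\<^sup>2"
            using norm_triangle_ineq[of "X \<omega>" "N \<omega>"] by (intro power_mono) auto
          also have "\<dots> \<le> 2 * (norm (X \<omega>))\<^sup>2 + 2 * (norm (N \<omega>))\<^sup>2"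
            using zero_le_power2[of "norm (X \<omega>) - norm (N \<omega>)"] by (simp add: power2_eq_square algebra_simps)
          finally show "norm ((norm (X \<omega> + N \<omega>))\<^sup>2) \<le> norm (2 * (norm (X \<omega>))\<^sup>2 + 2 * (norm (N \<omega>))\<^sup>2)" by simp
        qed
      qed
      then have "integrable M (\<lambda>\<omega>. ln BN + (ln (2 * S) + (norm (X \<omega> + N \<omega>))\<^sup>2 / v))"
        by auto
      then show ?thesis
        using distributed_integrable[OF HXY, of "\<lambda>z. ln BN + (ln (2 * S) + (norm (snd z))\<^sup>2 / v)"] Pxy_nn
        unfolding U_def by simp
    qed
    have intF: "integrable ?L F"
    proof (rule Bochner_Integration.integrable_bound)
      show "integrable ?L (\<lambda>z. \<bar>L z\<bar> + \<bar>U z\<bar>)" using intL intU by auto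
      show "F \<in> borel_measurable ?L" by measurable
      show "AE z in ?L. norm (F z) \<le> norm (\<bar>L z\<bar> + \<bar>U z\<bar>)"
        using FL FU by (intro AE_I2) (smt (verit) real_norm_def)
    qed
    have "K - m2 / 2 \<le> integral\<^sup>L ?L F"
      using integral_mono[OF intL intF FL] valL by simp
    moreover have "K - m2 / 2 = real CARD('n) / 2 * ln P - c"
      using P0 by (simp add: K_def c_def v_def ln_div right_diff_distrib)
    ultimately show "real CARD('n) / 2 * ln P - c \<le> mutual_information (exp 1) borel borel X (\<lambda>\<omega>. X \<omega> + N \<omega>)"
      using MI by (simp add: mi_lborel)
  qed
qed


end
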